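(* Let $T(n) = (3n+1)/2^{v_2(3n+1)}$ for odd $n\ge 1$, let $n_0$ be an odd positive integer with orbit $n_{t+1} = T(n_t)$, and $X_t = \mathbf{1}[n_t\equiv 1 \pmod 4]$. Let $s$ be a burst start (i.e. $X_s = 1$ and either $s = 0$ or $X_{s-1}=0$) with $n_s \equiv 25$, $29$, or $57 \pmod{64}$, and let $t \ge s$ be the burst-ending time of that burst run (the last index with $X_s = \dots = X_t = 1$). If $n_t \equiv 1 \pmod 8$, then $n_t \equiv 25 \pmod{32}$. In particular no such cycle yields a burst-ending value with $n_t \equiv 1 \pmod 8$ and $n_t \equiv 9 \pmod{32}$.
   Context: $v_2$ is the $2$-adic valuation. Burst starts in the classes $25, 29, 57 \pmod{64}$ are called unconditional non-mixing cycles. *)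

theory Defs
  imports "HOL-Computational_Algebra.Primes"
begin

definition v2 :: "nat \<Rightarrow> nat" where
  "v2 m = multiplicity (2::nat) m"

definition T :: "nat \<Rightarrow> nat" where
  "T n = (3 * n + 1) div 2 ^ v2 (3 * n + 1)"

definition orbit :: "nat \<Rightarrow> nat \<Rightarrow> nat" where
  "orbit n0 t = (T ^^ t) n0"

definition X :: "nat \<Rightarrow> nat \<Rightarrow> bool" where
  "X n0 t \<longleftrightarrow> orbit n0 t mod 4 = 1"

definition burst_start :: "nat \<Rightarrow> nat \<Rightarrow> bool" where
  "burst_start n0 s \<longleftrightarrow> X n0 s \<and> (s = 0 \<or> \<not> X n0 (s - 1))"

definition burst_end :: "nat \<Rightarrow> nat \<Rightarrow> nat \<Rightarrow> bool" where
  "burst_end n0 s t \<longleftrightarrow> s \<le> t \<and> (\<forall>i. s \<le> i \<and> i \<le> t \<longrightarrow> X n0 i) \<and> \<not> X n0 (Suc t)"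

end

theory Submission
  imports Defs
begin

lemma v2_odd: "odd m \<Longrightarrow> v2 m = 0"
  unfolding v2_def by (simp add: not_dvd_imp_multiplicity_0)

lemma v2_dbl: "m \<noteq> 0 \<Longrightarrow> v2 (2 * m) = Suc (v2 m)"
  unfolding v2_def by (simp add: multiplicity_times_same)

lemma T_mod: assumes "n mod 64 \<in> {25, 29, 57}" shows "T n mod 4 = 3"
proof -
  obtain k where k: "n = 64 * k + n mod 64" by (metis div_mod_decomp mult.commute)
  from assms consider "n mod 64 = 25" | "n mod 64 = 29" | "n mod 64 = 57" by blast
  then show ?thesis
  proof cases
    case 1
    have e: "3 * n + 1 = 2 * (2 * (19 + 48 * k))" using k 1 by presburger
    have "v2 (3 * n + 1) = 2" unfolding e
      by (subst v2_dbl, simp, subst v2_dbl, simp, subst v2_odd, simp, simp)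
    then have "T n = 19 + 48 * k" unfolding T_def e by simp
    then show ?thesis by presburger
  next
    case 2
    have e: "3 * n + 1 = 2 * (2 * (2 * (11 + 24 * k)))" using k 2 by presburger
    have "v2 (3 * n + 1) = 3" unfolding e
      by (subst v2_dbl, simp, subst v2_dbl, simp, subst v2_dbl, simp, subst v2_odd, simp, simp)
    then have "T n = 11 + 24 * k" unfolding T_def e by simp
    then show ?thesis by presburger
  next
    case 3
    have e: "3 * n + 1 = 2 * (2 * (43 + 48 * k))" using k 3 by presburger
    have "v2 (3 * n + 1) = 2" unfolding e
      by (subst v2_dbl, simp, subst v2_dbl, simp, subst v2_odd, simp, simp)
    then have "T n = 43 + 48 * k" unfolding T_def e by simp
    then show ?thesis by presburger
  qed
qed

theorem proposition5p3:
  fixes n0 s t :: nat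
  assumes "odd n0" and "n0 \<ge> 1"
    and "burst_start n0 s"
    and "orbit n0 s mod 64 \<in> {25, 29, 57}"
    and "burst_end n0 s t"
    and "orbit n0 t mod 8 = 1"
  shows "orbit n0 t mod 32 = 25 \<and> orbit n0 t mod 32 \<noteq> 9"
proof -
  have nx: "\<not> X n0 (Suc s)"
    using T_mod[OF assms(4)] by (simp add: X_def orbit_def)
  have "t = s"
  proof (rule ccontr)
    assume "t \<noteq> s"
    then have "Suc s \<le> t" using assms(5) unfolding burst_end_def by auto
    then have "X n0 (Suc s)" using assms(5) unfolding burst_end_def by auto
    with nx show False by simp
  qed
  have m: "orbit n0 s mod 32 = (orbit n0 s mod 64) mod 32" by (simp add: mod_mod_cancel)
  have m8: "orbit n0 s mod 8 = (orbit n0 s mod 64) mod 8" by (simp add: mod_mod_cancel)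
  show ?thesis using assms(4,6) m m8 \<open>t = s\<close> by auto
qed

end
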